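(* Let $G:\mathbb{N}\to\mathbb{R}$ satisfy $\lim_{k\to\infty}G(k)/k=0$ and $G(n)\ge0$ for all but finitely many $n$. Then for any $A\in\mathbb{N}$, the inequality $AG(n)-G(An)\ge0$ holds for infinitely many $n$. *)

theory Defs
  imports Complex_Main
begin

end

theory Submission
  imports Defs
begin

theorem lemma1:
  fixes G :: "nat \<Rightarrow> real" and A :: nat
  assumes lim: "(\<lambda>k. G k / real k) \<longlonglongrightarrow> 0"
    and ev_nonneg: "finite {n. G n < 0}"
    and A_pos: "A \<ge> 1"
  shows "infinite {n. real A * G n - G (A * n) \<ge> 0}"
proof
  assume fin: "finite {n. real A * G n - G (A * n) \<ge> 0}"
  show False
  proof (cases "A = 1")
    case True
    then have "{n. real A * G n - G (A * n) \<ge> 0} = UNIV" by simp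
    with fin show False by simp
  next
    case False
    with A_pos have A2: "A \<ge> 2" by simp
    from fin ev_nonneg have "finite ({n. real A * G n - G (A * n) \<ge> 0} \<union> {n. G n < 0})" by simp
    then obtain N where N: "\<And>n. n \<in> {n. real A * G n - G (A * n) \<ge> 0} \<union> {n. G n < 0} \<Longrightarrow> n < N"
      by (metis finite_nat_set_iff_bounded)
    have step: "\<And>n. n \<ge> N \<Longrightarrow> G (A * n) > real A * G n \<and> G n \<ge> 0"
    proof -
      fix n assume "n \<ge> N"
      then have "\<not> n < N" by simp
      then have "n \<notin> {n. real A * G n - G (A * n) \<ge> 0} \<union> {n. G n < 0}" using N by blast
      then show "G (A * n) > real A * G n \<and> G n \<ge> 0" by auto
    qed
    define m where "m = A * (N + 1)"
    have "N \<le> A * N" using A2 by simp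
    then have mN: "m \<ge> N" unfolding m_def by (simp add: trans_le_add2)
    have m1: "m \<ge> 1" using A2 unfolding m_def by simp
    have "G m > real A * G (N+1)" "G (N+1) \<ge> 0" using step[of "N+1"] m_def by auto
    then have Gm: "G m > 0" using A2
    proof -
      have "real A * G (N+1) \<ge> 0" using \<open>G (N+1) \<ge> 0\<close> by simp
      then show ?thesis using \<open>G m > real A * G (N+1)\<close> by linarith
    qed
    define c where "c = G m / real m"
    have c: "c > 0" using Gm m1 unfolding c_def by simp
    have ind: "G (A^k * m) \<ge> c * real (A^k * m)" for k
    proof (induction k)
      case 0
      then show ?case using m1 by (simp add: c_def)
    next
      case (Suc k)
      have "1 \<le> A^k" using A_pos by simp
      then have "m \<le> A^k * m" by simp
      then have ge: "A^k * m \<ge> N" using mN by linarith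
      have "G (A^Suc k * m) = G (A * (A^k*m))" by (simp add: mult.assoc)
      also have "\<dots> > real A * G (A^k*m)" using step[OF ge] by simp
      finally have "G (A^Suc k * m) \<ge> real A * G (A^k*m)" by simp
      moreover have "real A * G (A^k*m) \<ge> real A * (c * real (A^k*m))"
        using Suc by (simp add: mult_left_mono)
      ultimately show ?case by (simp add: algebra_simps)
    qed
    have ratio: "G (A^k * m) / real (A^k * m) \<ge> c" for k
    proof -
      have "A^k * m > 0" using A_pos m1 by simp
      then show ?thesis using ind[of k] by (simp add: pos_le_divide_eq)
    qed
    have sm: "strict_mono (\<lambda>k. A^k * m)"
      unfolding strict_mono_Suc_iff
    proof
      fix k
      have "0 < A^k * m" using A2 m1 by simp
      then have "1 * (A^k*m) < A * (A^k*m)" using A2 by (intro mult_strict_right_mono) auto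
      then show "A^k * m < A^Suc k * m" by (simp add: mult.assoc)
    qed
    have "(\<lambda>k. G (A^k * m) / real (A^k * m)) \<longlonglongrightarrow> 0"
      using LIMSEQ_subseq_LIMSEQ[OF lim sm] by (simp add: comp_def)
    then have "eventually (\<lambda>k. G (A^k * m) / real (A^k * m) < c) sequentially"
      using c by (simp add: order_tendstoD(2))
    then obtain k where "G (A^k * m) / real (A^k * m) < c" unfolding eventually_sequentially by blast
    with ratio[of k] show False by simp
  qed
qed

end
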